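(* For every locally consistent maximal P2P system $PS$, the set $MaxWM(PS)$ of maximal weak models of $PS$ is nonempty.
   Context: Peer atoms: a peer identifier is a positive integer; a peer atom is $i\!:\!p(t_1,\dots,t_k)$ with $i$ a peer identifier, $p$ a predicate and $t_j$ terms; $i\!:\!p$ is a peer predicate. A literal is an atom $A$ or its negation-as-failure $not\ A$. Built-in atoms are $X\,\theta\,Y$ with $\theta\in\{<,>,\le,\ge,=,\neq\}$. Rules (all safe): a standard rule $H\leftarrow \mathcal B$ with $H$ a peer atom and $\mathcal B$ a conjunction of peer literals and built-ins; an integrity constraint $\leftarrow \mathcal B$; a maximal mapping rule $i\!:\!h(X) \leftharpoonup j\!:\!(p_1(X_1),\dots,p_m(X_m),\varphi)$ with $i\neq j$; a minimal mapping rule, identical but written with $\leftharpoondown$. A peer $P_i=\langle D_i,LP_i,MP_i,IC_i\rangle$ consists of a finite set $D_i$ of ground atoms with identifier $i$, a finite set $LP_i$ of standard rules all of whose atoms have identifier $i$, a finite set $MP_i$ of mapping rules with head identifier $i$, and a finite set $IC_i$ of integrity constraints over atoms with identifier $i$. A P2P system is a set $PS=\{P_1,\dots,P_n\}$ of peers in which every source identifier of a mapping rule lies in $[1..n]$; $D,LP,MP,IC$ are the unions of the components, and $PS$ is identified with $D\cup LP\cup MP\cup IC$. A maximal P2P system is one all of whose mapping rules are maximal. A predicate is derived if it heads a standard rule, a mapping predicate if it heads a mapping rule, base otherwise; each predicate has exactly one type and each mapping predicate heads exactly one mapping rule. Semantics: an interpretation is a set of ground peer atoms; $A$ true iff $A\in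 M$, $not\ A$ true iff $A\notin M$; a standard rule is satisfied iff its body is false or its head true; a constraint iff its body is false. $MM(\Pi)$ is the set of inclusion-minimal models of a program $\Pi$. The stable models $SM(\Pi)$ of a program $\Pi$ are the interpretations $M$ that are the minimal model of the Gelfond–Lifschitz reduct $\Pi^M$ (remove from $ground(\Pi)$ rules containing $not\ A$ with $A\in M$, then delete all negative literals). A peer $P_i$ is locally consistent if $SM(D_i\cup LP_i\cup IC_i)\neq\emptyset$; a P2P system is locally consistent if all its peers are. $St(r)$ turns a mapping rule with head $H$ and body $\mathcal B$ into $H\leftarrow\mathcal B$. An interpretation $M$ is a weak model of $PS$ if $\{M\}=MM(St(PS^M))$, where $PS^M$ is obtained from $ground(PS)$ by removing every rule whose body contains $not\ A$ with $A\in M$, deleting negative literals from the remaining rules, and removing every ground mapping rule whose head is not in $M$. $M[MP]$ is the set of atoms of $M$ with a mapping predicate. For weak models, $M\sqsupseteq_{Max}N$ iff $M[MP]\supseteq N[MP]$, and $M\sqsupset_{Max}N$ iff $M\sqsupseteq_{Max}N$ and not $N\sqsupseteq_{Max}M$. A weak model $M$ is maximal if there is no weak model $N$ with $N\sqsupset_{Max}M$; $MaxWM(PS)$ is the set of maximal weak models. *)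

theory Defs
  imports Main
begin

datatype ('c,'v) trm = Const 'c | Var 'v

datatype ('p,'c,'v) atom = Atom (aid: nat) (apred: 'p) (aargs: "('c,'v) trm list")

datatype ('p,'c) gatom = GAtom (gid: nat) (gpred: 'p) (gargs: "'c list")

datatype cmp = Lt | Gt | Le | Ge | Eq | Neq

datatype ('c,'v) builtin = BI cmp "('c,'v) trm" "('c,'v) trm"

datatype ('p,'c,'v) lit = Pos "('p,'c,'v) atom" | Neg "('p,'c,'v) atom" | Bin "('c,'v) builtin"

text \<open>Rules: standard rule H <- B, integrity constraint <- B,
  maximal mapping rule  i:h(X) <-max- j:(p1(X1),...,pm(Xm), phi),
  minimal mapping rule  i:h(X) <-min- j:(p1(X1),...,pm(Xm), phi).\<close>
datatype ('p,'c,'v) rule =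
    Std "('p,'c,'v) atom" "('p,'c,'v) lit list"
  | Constr "('p,'c,'v) lit list"
  | MaxMap "('p,'c,'v) atom" nat "('p,'c,'v) atom list" "('c,'v) builtin list"
  | MinMap "('p,'c,'v) atom" nat "('p,'c,'v) atom list" "('c,'v) builtin list"

record ('p,'c,'v) peer =
  pD  :: "('p,'c) gatom set"
  pLP :: "('p,'c,'v) rule set"
  pMP :: "('p,'c,'v) rule set"
  pIC :: "('p,'c,'v) rule set"

text \<open>A P2P system {P1,...,Pn} is a list; peer i (1 <= i <= n) is the (i-1)-th element.\<close>
type_synonym ('p,'c,'v) p2p = "('p,'c,'v) peer list"

definition peer_of :: "('p,'c,'v) p2p \<Rightarrow> nat \<Rightarrow> ('p,'c,'v) peer" where
  "peer_of PS i = PS ! (i - 1)"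

definition peer_ids :: "('p,'c,'v) p2p \<Rightarrow> nat set" where
  "peer_ids PS = {1..length PS}"

definition sysD :: "('p,'c,'v) p2p \<Rightarrow> ('p,'c) gatom set" where
  "sysD PS = (\<Union>i\<in>peer_ids PS. pD (peer_of PS i))"
definition sysLP :: "('p,'c,'v) p2p \<Rightarrow> ('p,'c,'v) rule set" where
  "sysLP PS = (\<Union>i\<in>peer_ids PS. pLP (peer_of PS i))"
definition sysMP :: "('p,'c,'v) p2p \<Rightarrow> ('p,'c,'v) rule set" where
  "sysMP PS = (\<Union>i\<in>peer_ids PS. pMP (peer_of PS i))"
definition sysIC :: "('p,'c,'v) p2p \<Rightarrow> ('p,'c,'v) rule set" where
  "sysIC PS = (\<Union>i\<in>peer_ids PS. pIC (peer_of PS i))"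

fun vars_trm :: "('c,'v) trm \<Rightarrow> 'v set" where
  "vars_trm (Const c) = {}" | "vars_trm (Var v) = {v}"

definition vars_atom :: "('p,'c,'v) atom \<Rightarrow> 'v set" where
  "vars_atom a = (\<Union>t\<in>set (aargs a). vars_trm t)"

fun vars_bi :: "('c,'v) builtin \<Rightarrow> 'v set" where
  "vars_bi (BI _ s t) = vars_trm s \<union> vars_trm t"

fun vars_lit :: "('p,'c,'v) lit \<Rightarrow> 'v set" where
  "vars_lit (Pos a) = vars_atom a" | "vars_lit (Neg a) = vars_atom a" | "vars_lit (Bin b) = vars_bi b"

definition pos_atoms :: "('p,'c,'v) lit list \<Rightarrow> ('p,'c,'v) atom set" where
  "pos_atoms B = {a. Pos a \<in> set B}"
definition neg_atoms :: "('p,'c,'v) lit list \<Rightarrow> ('p,'c,'v) atom set" where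
  "neg_atoms B = {a. Neg a \<in> set B}"
definition builtins :: "('p,'c,'v) lit list \<Rightarrow> ('c,'v) builtin set" where
  "builtins B = {b. Bin b \<in> set B}"

fun safe :: "('p,'c,'v) rule \<Rightarrow> bool" where
  "safe (Std h B) = (vars_atom h \<union> (\<Union>l\<in>set B. vars_lit l) \<subseteq> (\<Union>a\<in>pos_atoms B. vars_atom a))"
| "safe (Constr B) = ((\<Union>l\<in>set B. vars_lit l) \<subseteq> (\<Union>a\<in>pos_atoms B. vars_atom a))"
| "safe (MaxMap h j as phi) = (vars_atom h \<union> (\<Union>b\<in>set phi. vars_bi b) \<subseteq> (\<Union>a\<in>set as. vars_atom a))"
| "safe (MinMap h j as phi) = (vars_atom h \<union> (\<Union>b\<in>set phi. vars_bi b) \<subseteq> (\<Union>a\<in>set as. vars_atom a))"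

fun rule_atoms :: "('p,'c,'v) rule \<Rightarrow> ('p,'c,'v) atom set" where
  "rule_atoms (Std h B) = insert h (pos_atoms B \<union> neg_atoms B)"
| "rule_atoms (Constr B) = pos_atoms B \<union> neg_atoms B"
| "rule_atoms (MaxMap h j as phi) = insert h (set as)"
| "rule_atoms (MinMap h j as phi) = insert h (set as)"

fun is_std :: "('p,'c,'v) rule \<Rightarrow> bool" where
  "is_std (Std _ _) = True" | "is_std _ = False"
fun is_constr :: "('p,'c,'v) rule \<Rightarrow> bool" where
  "is_constr (Constr _) = True" | "is_constr _ = False"
fun is_mapping :: "('p,'c,'v) rule \<Rightarrow> bool" where
  "is_mapping (MaxMap _ _ _ _) = True" | "is_mapping (MinMap _ _ _ _) = True" | "is_mapping _ = False"
fun is_max_mapping :: "('p,'c,'v) rule \<Rightarrow> bool" where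
  "is_max_mapping (MaxMap _ _ _ _) = True" | "is_max_mapping _ = False"

fun wf_mapping :: "nat \<Rightarrow> nat \<Rightarrow> ('p,'c,'v) rule \<Rightarrow> bool" where
  "wf_mapping n i (MaxMap h j as phi) = (aid h = i \<and> j \<noteq> i \<and> j \<in> {1..n} \<and> (\<forall>a\<in>set as. aid a = j))"
| "wf_mapping n i (MinMap h j as phi) = (aid h = i \<and> j \<noteq> i \<and> j \<in> {1..n} \<and> (\<forall>a\<in>set as. aid a = j))"
| "wf_mapping n i _ = False"

definition wf_peer :: "nat \<Rightarrow> nat \<Rightarrow> ('p,'c,'v) peer \<Rightarrow> bool" where
  "wf_peer n i P \<longleftrightarrow>
     finite (pD P) \<and> finite (pLP P) \<and> finite (pMP P) \<and> finite (pIC P) \<and>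
     (\<forall>a\<in>pD P. gid a = i) \<and>
     (\<forall>r\<in>pLP P. is_std r \<and> (\<forall>a\<in>rule_atoms r. aid a = i)) \<and>
     (\<forall>r\<in>pMP P. wf_mapping n i r) \<and>
     (\<forall>r\<in>pIC P. is_constr r \<and> (\<forall>a\<in>rule_atoms r. aid a = i)) \<and>
     (\<forall>r\<in>pLP P \<union> pMP P \<union> pIC P. safe r)"

fun head_pp :: "('p,'c,'v) rule \<Rightarrow> (nat \<times> 'p) option" where
  "head_pp (Std h _) = Some (aid h, apred h)"
| "head_pp (Constr _) = None"
| "head_pp (MaxMap h _ _ _) = Some (aid h, apred h)"
| "head_pp (MinMap h _ _ _) = Some (aid h, apred h)"

definition derived_preds :: "('p,'c,'v) p2p \<Rightarrow> (nat \<times> 'p) set" where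
  "derived_preds PS = {q. \<exists>r\<in>sysLP PS. head_pp r = Some q}"

definition mapping_preds :: "('p,'c,'v) p2p \<Rightarrow> (nat \<times> 'p) set" where
  "mapping_preds PS = {q. \<exists>r\<in>sysMP PS. head_pp r = Some q}"

definition wf_system :: "('p,'c,'v) p2p \<Rightarrow> bool" where
  "wf_system PS \<longleftrightarrow>
     (\<forall>i\<in>peer_ids PS. wf_peer (length PS) i (peer_of PS i)) \<and>
     derived_preds PS \<inter> mapping_preds PS = {} \<and>
     (\<forall>q\<in>mapping_preds PS. \<exists>!r. r \<in> sysMP PS \<and> head_pp r = Some q)"

definition maximal_system :: "('p,'c,'v) p2p \<Rightarrow> bool" where
  "maximal_system PS \<longleftrightarrow> (\<forall>r\<in>sysMP PS. is_max_mapping r)"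

text \<open>Ground rule: optional head (None for constraints), positive body atoms,
  negated body atoms, truth value of the (ground) built-in atoms, and a flag
  marking ground mapping rules.\<close>
datatype ('p,'c) grule =
  GR (ghead: "('p,'c) gatom option") (gpos: "('p,'c) gatom list") (gneg: "('p,'c) gatom list")
     (gbi: bool) (gmap: bool)

fun inst_trm :: "('v \<Rightarrow> 'c) \<Rightarrow> ('c,'v) trm \<Rightarrow> 'c" where
  "inst_trm \<sigma> (Const c) = c" | "inst_trm \<sigma> (Var v) = \<sigma> v"

definition inst_atom :: "('v \<Rightarrow> 'c) \<Rightarrow> ('p,'c,'v) atom \<Rightarrow> ('p,'c) gatom" where
  "inst_atom \<sigma> a = GAtom (aid a) (apred a) (map (inst_trm \<sigma>) (aargs a))"

fun eval_cmp :: "cmp \<Rightarrow> 'c::linorder \<Rightarrow> 'c \<Rightarrow> bool" where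
  "eval_cmp Lt x y = (x < y)" | "eval_cmp Gt x y = (x > y)"
| "eval_cmp Le x y = (x \<le> y)" | "eval_cmp Ge x y = (x \<ge> y)"
| "eval_cmp Eq x y = (x = y)" | "eval_cmp Neq x y = (x \<noteq> y)"

fun eval_bi :: "('v \<Rightarrow> 'c::linorder) \<Rightarrow> ('c,'v) builtin \<Rightarrow> bool" where
  "eval_bi \<sigma> (BI \<theta> s t) = eval_cmp \<theta> (inst_trm \<sigma> s) (inst_trm \<sigma> t)"

definition pos_list :: "('p,'c,'v) lit list \<Rightarrow> ('p,'c,'v) atom list" where
  "pos_list B = concat (map (\<lambda>l. case l of Pos a \<Rightarrow> [a] | _ \<Rightarrow> []) B)"
definition neg_list :: "('p,'c,'v) lit list \<Rightarrow> ('p,'c,'v) atom list" where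
  "neg_list B = concat (map (\<lambda>l. case l of Neg a \<Rightarrow> [a] | _ \<Rightarrow> []) B)"
definition bi_list :: "('p,'c,'v) lit list \<Rightarrow> ('c,'v) builtin list" where
  "bi_list B = concat (map (\<lambda>l. case l of Bin b \<Rightarrow> [b] | _ \<Rightarrow> []) B)"

fun ground_rule :: "('v \<Rightarrow> 'c::linorder) \<Rightarrow> ('p,'c,'v) rule \<Rightarrow> ('p,'c) grule" where
  "ground_rule \<sigma> (Std h B) =
     GR (Some (inst_atom \<sigma> h)) (map (inst_atom \<sigma>) (pos_list B)) (map (inst_atom \<sigma>) (neg_list B))
        (list_all (eval_bi \<sigma>) (bi_list B)) False"
| "ground_rule \<sigma> (Constr B) =
     GR None (map (inst_atom \<sigma>) (pos_list B)) (map (inst_atom \<sigma>) (neg_list B))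
        (list_all (eval_bi \<sigma>) (bi_list B)) False"
| "ground_rule \<sigma> (MaxMap h j as phi) =
     GR (Some (inst_atom \<sigma> h)) (map (inst_atom \<sigma>) as) [] (list_all (eval_bi \<sigma>) phi) True"
| "ground_rule \<sigma> (MinMap h j as phi) =
     GR (Some (inst_atom \<sigma> h)) (map (inst_atom \<sigma>) as) [] (list_all (eval_bi \<sigma>) phi) True"

definition fact :: "('p,'c) gatom \<Rightarrow> ('p,'c) grule" where
  "fact a = GR (Some a) [] [] True False"

definition ground :: "('p,'c) gatom set \<Rightarrow> ('p,'c::linorder,'v) rule set \<Rightarrow> ('p,'c) grule set" where
  "ground D R = fact ` D \<union> {ground_rule \<sigma> r | \<sigma> r. r \<in> R}"

type_synonym ('p,'c) interp = "('p,'c) gatom set"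

definition body_true :: "('p,'c) interp \<Rightarrow> ('p,'c) grule \<Rightarrow> bool" where
  "body_true M g \<longleftrightarrow> gbi g \<and> set (gpos g) \<subseteq> M \<and> set (gneg g) \<inter> M = {}"

definition is_model :: "('p,'c) grule set \<Rightarrow> ('p,'c) interp \<Rightarrow> bool" where
  "is_model \<Pi> M \<longleftrightarrow> (\<forall>g\<in>\<Pi>. body_true M g \<longrightarrow> (case ghead g of None \<Rightarrow> False | Some h \<Rightarrow> h \<in> M))"

definition MM :: "('p,'c) grule set \<Rightarrow> ('p,'c) interp set" where
  "MM \<Pi> = {M. is_model \<Pi> M \<and> \<not> (\<exists>N. N \<subset> M \<and> is_model \<Pi> N)}"

definition drop_neg :: "('p,'c) grule \<Rightarrow> ('p,'c) grule" where
  "drop_neg g = GR (ghead g) (gpos g) [] (gbi g) (gmap g)"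

definition GL :: "('p,'c) grule set \<Rightarrow> ('p,'c) interp \<Rightarrow> ('p,'c) grule set" where
  "GL \<Pi> M = drop_neg ` {g\<in>\<Pi>. set (gneg g) \<inter> M = {}}"

definition SM :: "('p,'c) grule set \<Rightarrow> ('p,'c) interp set" where
  "SM \<Pi> = {M. M \<in> MM (GL \<Pi> M)}"

definition locally_consistent :: "('p,'c::linorder,'v) p2p \<Rightarrow> bool" where
  "locally_consistent PS \<longleftrightarrow>
     (\<forall>i\<in>peer_ids PS. let P = peer_of PS i in SM (ground (pD P) (pLP P \<union> pIC P)) \<noteq> {})"

definition ground_sys :: "('p,'c::linorder,'v) p2p \<Rightarrow> ('p,'c) grule set" where
  "ground_sys PS = ground (sysD PS) (sysLP PS \<union> sysMP PS \<union> sysIC PS)"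

definition sys_reduct :: "('p,'c) grule set \<Rightarrow> ('p,'c) interp \<Rightarrow> ('p,'c) grule set" where
  "sys_reduct \<Pi> M = drop_neg ` {g\<in>\<Pi>. set (gneg g) \<inter> M = {} \<and>
                                  (gmap g \<longrightarrow> (\<exists>h. ghead g = Some h \<and> h \<in> M))}"

definition St :: "('p,'c) grule set \<Rightarrow> ('p,'c) grule set" where
  "St \<Pi> = (\<lambda>g. GR (ghead g) (gpos g) (gneg g) (gbi g) False) ` \<Pi>"

definition weak_model :: "('p,'c::linorder,'v) p2p \<Rightarrow> ('p,'c) interp \<Rightarrow> bool" where
  "weak_model PS M \<longleftrightarrow> MM (St (sys_reduct (ground_sys PS) M)) = {M}"

definition restr_MP :: "('p,'c::linorder,'v) p2p \<Rightarrow> ('p,'c) interp \<Rightarrow> ('p,'c) interp" where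
  "restr_MP PS M = {a\<in>M. (gid a, gpred a) \<in> mapping_preds PS}"

definition MaxWM :: "('p,'c::linorder,'v) p2p \<Rightarrow> ('p,'c) interp set" where
  "MaxWM PS = {M. weak_model PS M \<and>
     \<not> (\<exists>N. weak_model PS N \<and> restr_MP PS N \<supseteq> restr_MP PS M \<and> \<not> restr_MP PS M \<supseteq> restr_MP PS N)}"

end

theory Submission
  imports Defs
begin

definition stn :: "('p,'c) grule \<Rightarrow> ('p,'c) grule" where
  "stn g = GR (ghead g) (gpos g) [] (gbi g) False"

lemma St_reduct: "St (sys_reduct \<Pi> M) = stn ` {g\<in>\<Pi>. set (gneg g) \<inter> M = {} \<and> (gmap g \<longrightarrow> (\<exists>h. ghead g = Some h \<and> h \<in> M))}"
  unfolding St_def sys_reduct_def image_image stn_def drop_neg_def by simp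

lemma body_mono: "body_true N g \<Longrightarrow> N \<subseteq> M \<Longrightarrow> gneg g = [] \<Longrightarrow> body_true M g"
  unfolding body_true_def by auto

lemma horn_int: assumes "\<forall>g\<in>\<Pi>. gneg g = []" "is_model \<Pi> A" "is_model \<Pi> B" shows "is_model \<Pi> (A \<inter> B)"
  unfolding is_model_def
proof
  fix g assume g: "g \<in> \<Pi>"
  show "body_true (A \<inter> B) g \<longrightarrow> (case ghead g of None \<Rightarrow> False | Some h \<Rightarrow> h \<in> A \<inter> B)"
  proof
    assume bt: "body_true (A \<inter> B) g"
    have "body_true A g" "body_true B g" using body_mono[OF bt] assms(1) g by auto
    then have "case ghead g of None \<Rightarrow> False | Some h \<Rightarrow> h \<in> A" "case ghead g of None \<Rightarrow> False | Some h \<Rightarrow> h \<in> B"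
      using assms(2,3) g unfolding is_model_def by auto
    then show "case ghead g of None \<Rightarrow> False | Some h \<Rightarrow> h \<in> A \<inter> B" by (auto split: option.splits)
  qed
qed

lemma horn_unique: assumes "\<forall>g\<in>\<Pi>. gneg g = []" "A \<in> MM \<Pi>" "B \<in> MM \<Pi>" shows "A = B"
proof -
  have mA: "is_model \<Pi> A" and mB: "is_model \<Pi> B" and nA: "\<not>(\<exists>N. N \<subset> A \<and> is_model \<Pi> N)"
    and nB: "\<not>(\<exists>N. N \<subset> B \<and> is_model \<Pi> N)"
    using assms(2,3) unfolding MM_def by auto
  have "is_model \<Pi> (A \<inter> B)" using horn_int[OF assms(1) mA mB] .
  then have "\<not> A \<inter> B \<subset> A" "\<not> A \<inter> B \<subset> B" using nA nB by auto
  then have "A \<inter> B = A" "A \<inter> B = B" by auto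
  then show ?thesis by simp
qed

lemma set_pos_list: "set (pos_list B) = pos_atoms B"
  unfolding pos_list_def pos_atoms_def by (induction B) (auto split: lit.splits)

lemma set_neg_list: "set (neg_list B) = neg_atoms B"
  unfolding neg_list_def neg_atoms_def by (induction B) (auto split: lit.splits)

lemma inst_id[simp]: "gid (inst_atom \<sigma> a) = aid a" "gpred (inst_atom \<sigma> a) = apred a"
  "gargs (inst_atom \<sigma> a) = map (inst_trm \<sigma>) (aargs a)"
  by (simp_all add: inst_atom_def)

definition Gi :: "('p,'c::linorder,'v) p2p \<Rightarrow> nat \<Rightarrow> ('p,'c) grule set" where
  "Gi PS i = ground (pD (peer_of PS i)) (pLP (peer_of PS i) \<union> pIC (peer_of PS i))"

definition gatoms :: "('p,'c) grule \<Rightarrow> ('p,'c) gatom set" where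
  "gatoms g = set_option (ghead g) \<union> set (gpos g) \<union> set (gneg g)"

lemma wf_peerD: "wf_system PS \<Longrightarrow> i \<in> peer_ids PS \<Longrightarrow> wf_peer (length PS) i (peer_of PS i)"
  unfolding wf_system_def by auto

lemma Gi_props:
  assumes wf: "wf_system PS" and i: "i \<in> peer_ids PS" and g: "g \<in> Gi PS i"
  shows "(\<forall>a\<in>gatoms g. gid a = i) \<and> gmap g = False \<and> g \<in> ground_sys PS"
proof -
  have w: "wf_peer (length PS) i (peer_of PS i)" using wf_peerD[OF wf i] .
  have sub1: "pD (peer_of PS i) \<subseteq> sysD PS" using i unfolding sysD_def by auto
  have sub2: "pLP (peer_of PS i) \<subseteq> sysLP PS" using i unfolding sysLP_def by auto
  have sub3: "pIC (peer_of PS i) \<subseteq> sysIC PS" using i unfolding sysIC_def by auto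
  from g consider (f) a where "a \<in> pD (peer_of PS i)" "g = fact a"
    | (r) \<sigma> r where "r \<in> pLP (peer_of PS i) \<union> pIC (peer_of PS i)" "g = ground_rule \<sigma> r"
    unfolding Gi_def ground_def by blast
  then show ?thesis
  proof cases
    case f
    then show ?thesis using w sub1 unfolding wf_peer_def fact_def gatoms_def ground_sys_def ground_def
      by auto
  next
    case r
    have gs: "g \<in> ground_sys PS" using r sub2 sub3 unfolding ground_sys_def ground_def by blast
    have "is_std r \<or> is_constr r" and ids: "\<forall>a\<in>rule_atoms r. aid a = i"
      using r(1) w unfolding wf_peer_def by auto
    then show ?thesis using gs r(2)
    proof (cases r)
      case (Std h B)
      then show ?thesis using gs r(2) ids
        by (force simp add: gatoms_def set_pos_list set_neg_list)
    next
      case (Constr B)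
      then show ?thesis using gs r(2) ids
        by (force simp add: gatoms_def set_pos_list set_neg_list)
    qed simp_all
  qed
qed


lemma sys_cases:
  assumes wf: "wf_system PS" and g: "g \<in> ground_sys PS"
  shows "(\<exists>i\<in>peer_ids PS. g \<in> Gi PS i) \<or> (gmap g \<and> ghead g \<noteq> None)"
proof -
  from g consider (f) a where "a \<in> sysD PS" "g = fact a"
    | (l) \<sigma> r where "r \<in> sysLP PS \<union> sysIC PS" "g = ground_rule \<sigma> r"
    | (m) \<sigma> r where "r \<in> sysMP PS" "g = ground_rule \<sigma> r"
    unfolding ground_sys_def ground_def by blast
  then show ?thesis
  proof cases
    case f
    then obtain i where "i \<in> peer_ids PS" "a \<in> pD (peer_of PS i)" unfolding sysD_def by auto
    then show ?thesis using f unfolding Gi_def ground_def by blast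
  next
    case l
    then obtain i where "i \<in> peer_ids PS" "r \<in> pLP (peer_of PS i) \<union> pIC (peer_of PS i)"
      unfolding sysLP_def sysIC_def by auto
    then show ?thesis using l unfolding Gi_def ground_def by blast
  next
    case m
    then obtain i where i: "i \<in> peer_ids PS" "r \<in> pMP (peer_of PS i)"
      unfolding sysMP_def by auto
    then have "wf_mapping (length PS) i r" using wf_peerD[OF wf i(1)] unfolding wf_peer_def by auto
    then show ?thesis using m by (cases r) auto
  qed
qed

lemma SM_ids:
  assumes wf: "wf_system PS" and i: "i \<in> peer_ids PS" and M: "M \<in> SM (Gi PS i)"
  shows "\<forall>a\<in>M. gid a = i"
proof -
  let ?P = "GL (Gi PS i) M"
  have mod: "is_model ?P M" and mn: "\<not> (\<exists>N. N \<subset> M \<and> is_model ?P N)"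
    using M unfolding SM_def MM_def by auto
  have "is_model ?P {a\<in>M. gid a = i}"
    unfolding is_model_def
  proof (intro ballI impI)
    fix g' assume g': "g' \<in> ?P" and bt: "body_true {a\<in>M. gid a = i} g'"
    obtain g where g: "g \<in> Gi PS i" "g' = drop_neg g" using g' unfolding GL_def by auto
    have ids: "\<forall>a\<in>gatoms g. gid a = i" using Gi_props[OF wf i g(1)] by simp
    have "body_true M g'" using body_mono[OF bt] g(2) unfolding drop_neg_def by auto
    then have "case ghead g' of None \<Rightarrow> False | Some h \<Rightarrow> h \<in> M" using mod g' unfolding is_model_def by auto
    then show "case ghead g' of None \<Rightarrow> False | Some h \<Rightarrow> h \<in> {a\<in>M. gid a = i}"
      using ids g(2) unfolding drop_neg_def gatoms_def by (auto split: option.splits)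
  qed
  then have "\<not> {a\<in>M. gid a = i} \<subset> M" using mn by auto
  then have "{a\<in>M. gid a = i} = M" by auto
  then show ?thesis by blast
qed


lemma stn_gneg: "\<forall>g\<in>stn ` S. gneg g = []"
  by (auto simp: stn_def)

lemma weak_exists:
  assumes wf: "wf_system PS" and lc: "locally_consistent PS"
  shows "\<exists>M. weak_model PS M"
proof -
  have "\<forall>i\<in>peer_ids PS. \<exists>M. M \<in> SM (Gi PS i)"
    using lc unfolding locally_consistent_def Gi_def Let_def by auto
  then obtain Ms where Ms: "\<And>i. i \<in> peer_ids PS \<Longrightarrow> Ms i \<in> SM (Gi PS i)" by metis
  define M0 where "M0 = (\<Union>i\<in>peer_ids PS. Ms i)"
  have Msids: "gid a = i" if "i \<in> peer_ids PS" "a \<in> Ms i" for i a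
    using SM_ids[OF wf that(1) Ms[OF that(1)]] that(2) by blast
  have key: "a \<in> Ms i" if i: "i \<in> peer_ids PS" and a: "a \<in> M0" and ga: "gid a = i" for i a
  proof -
    obtain j where j: "j \<in> peer_ids PS" "a \<in> Ms j" using a unfolding M0_def by blast
    have "gid a = j" using Msids[OF j] .
    then show ?thesis using j ga by simp
  qed
  have sub: "\<And>i. i \<in> peer_ids PS \<Longrightarrow> Ms i \<subseteq> M0" unfolding M0_def by blast
  have modi: "\<And>i. i \<in> peer_ids PS \<Longrightarrow> is_model (GL (Gi PS i) (Ms i)) (Ms i)"
    and mini: "\<And>i. i \<in> peer_ids PS \<Longrightarrow> \<not> (\<exists>N. N \<subset> Ms i \<and> is_model (GL (Gi PS i) (Ms i)) N)"
    using Ms unfolding SM_def MM_def by auto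
  define S0 where "S0 = {g\<in>ground_sys PS. set (gneg g) \<inter> M0 = {} \<and> (gmap g \<longrightarrow> (\<exists>h. ghead g = Some h \<and> h \<in> M0))}"
  define P0 where "P0 = stn ` S0"
  have P0eq: "St (sys_reduct (ground_sys PS) M0) = P0" unfolding P0_def S0_def St_reduct ..
  have m0: "is_model P0 M0"
    unfolding is_model_def
  proof (intro ballI impI)
    fix g' assume g': "g' \<in> P0" and bt: "body_true M0 g'"
    obtain g where g: "g \<in> S0" "g' = stn g" using g' unfolding P0_def by auto
    have gs: "g \<in> ground_sys PS" using g(1) unfolding S0_def by auto
    from sys_cases[OF wf gs]
    show "case ghead g' of None \<Rightarrow> False | Some h \<Rightarrow> h \<in> M0"
    proof
      assume "\<exists>i\<in>peer_ids PS. g \<in> Gi PS i"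
      then obtain i where i: "i \<in> peer_ids PS" and gi: "g \<in> Gi PS i" by blast
      have pr: "(\<forall>a\<in>gatoms g. gid a = i) \<and> gmap g = False" using Gi_props[OF wf i gi] by simp
      have "set (gneg g) \<inter> Ms i = {}" using g(1) sub[OF i] unfolding S0_def by auto
      then have inGL: "drop_neg g \<in> GL (Gi PS i) (Ms i)" using gi unfolding GL_def by auto
      have "set (gpos g) \<subseteq> Ms i" using bt g(2) key[OF i] pr
        unfolding body_true_def stn_def gatoms_def by auto
      then have "body_true (Ms i) (drop_neg g)" using bt g(2)
        unfolding body_true_def stn_def drop_neg_def by auto
      then have "case ghead (drop_neg g) of None \<Rightarrow> False | Some h \<Rightarrow> h \<in> Ms i"
        using modi[OF i, unfolded is_model_def, rule_format, OF inGL] by simp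
      then show ?thesis using g(2) sub[OF i] unfolding stn_def drop_neg_def
        by (auto split: option.splits)
    next
      assume "gmap g \<and> ghead g \<noteq> None"
      then show ?thesis using g unfolding S0_def stn_def by auto
    qed
  qed
  have m0min: "\<not> (\<exists>N. N \<subset> M0 \<and> is_model P0 N)"
  proof
    assume "\<exists>N. N \<subset> M0 \<and> is_model P0 N"
    then obtain N where N: "N \<subset> M0" "is_model P0 N" by blast
    have "Ms i \<subseteq> N" if i: "i \<in> peer_ids PS" for i
    proof -
      let ?Ni = "{a\<in>N. gid a = i}"
      have "is_model (GL (Gi PS i) (Ms i)) ?Ni"
        unfolding is_model_def
      proof (intro ballI impI)
        fix g' assume g': "g' \<in> GL (Gi PS i) (Ms i)" and bt: "body_true ?Ni g'"
        obtain g where g: "g \<in> Gi PS i" "set (gneg g) \<inter> Ms i = {}" "g' = drop_neg g"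
          using g' unfolding GL_def by auto
        have pr: "(\<forall>a\<in>gatoms g. gid a = i) \<and> gmap g = False \<and> g \<in> ground_sys PS"
          using Gi_props[OF wf i g(1)] .
        have "set (gneg g) \<inter> M0 = {}" using g(2) key[OF i] pr unfolding gatoms_def by blast
        then have "g \<in> S0" using pr unfolding S0_def by auto
        then have inP: "g' \<in> P0" using g(3) pr unfolding P0_def stn_def drop_neg_def by auto
        have "body_true N g'" using body_mono[OF bt] g(3) unfolding drop_neg_def by auto
        then have "case ghead g' of None \<Rightarrow> False | Some h \<Rightarrow> h \<in> N"
          using N(2)[unfolded is_model_def, rule_format, OF inP] by simp
        then show "case ghead g' of None \<Rightarrow> False | Some h \<Rightarrow> h \<in> ?Ni"
          using pr g(3) unfolding gatoms_def drop_neg_def by (auto split: option.splits)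
      qed
      moreover have "?Ni \<subseteq> Ms i" using N(1) key[OF i] by blast
      ultimately have "\<not> ?Ni \<subset> Ms i" using mini[OF i] by auto
      with \<open>?Ni \<subseteq> Ms i\<close> have "?Ni = Ms i" by auto
      then show ?thesis by auto
    qed
    then have "M0 \<subseteq> N" unfolding M0_def by auto
    with N(1) show False by auto
  qed
  have "M0 \<in> MM P0" using m0 m0min unfolding MM_def by auto
  have uniq: "N = M0" if "N \<in> MM P0" for N
    using horn_unique[OF stn_gneg[of S0, folded P0_def] that \<open>M0 \<in> MM P0\<close>] .
  have "MM P0 = {M0}"
  proof (rule set_eqI)
    fix N
    show "N \<in> MM P0 \<longleftrightarrow> N \<in> {M0}"
    proof
      assume "N \<in> MM P0" then have "N = M0" by (rule uniq)
      then show "N \<in> {M0}" by simp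
    next
      assume "N \<in> {M0}" then show "N \<in> MM P0" using \<open>M0 \<in> MM P0\<close> by simp
    qed
  qed
  then have "weak_model PS M0" unfolding weak_model_def P0eq .
  then show ?thesis ..
qed


fun rhead :: "('p,'c,'v) rule \<Rightarrow> ('p,'c,'v) atom option" where
  "rhead (Std h _) = Some h" | "rhead (Constr _) = None"
| "rhead (MaxMap h _ _ _) = Some h" | "rhead (MinMap h _ _ _) = Some h"

definition sysR :: "('p,'c::linorder,'v) p2p \<Rightarrow> ('p,'c,'v) rule set" where
  "sysR PS = sysLP PS \<union> sysMP PS \<union> sysIC PS"

definition HA :: "('p,'c::linorder,'v) p2p \<Rightarrow> ('p,'c,'v) atom set" where
  "HA PS = (\<Union>r\<in>sysR PS. set_option (rhead r))"

definition Pset :: "('p,'c::linorder,'v) p2p \<Rightarrow> (nat \<times> 'p) set" where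
  "Pset PS = (\<lambda>a. (gid a, gpred a)) ` sysD PS \<union> (\<lambda>h. (aid h, apred h)) ` HA PS"

definition Cset :: "('p,'c::linorder,'v) p2p \<Rightarrow> 'c set" where
  "Cset PS = (\<Union>a\<in>sysD PS. set (gargs a)) \<union> (\<Union>h\<in>HA PS. Const -` set (aargs h))"

definition Lb :: "('p,'c::linorder,'v) p2p \<Rightarrow> nat" where
  "Lb PS = (\<Sum>a\<in>sysD PS. length (gargs a)) + (\<Sum>h\<in>HA PS. length (aargs h))"

definition Good :: "('p,'c::linorder,'v) p2p \<Rightarrow> ('p,'c) gatom set" where
  "Good PS = {a. (gid a, gpred a) \<in> Pset PS \<and> set (gargs a) \<subseteq> Cset PS \<and> length (gargs a) \<le> Lb PS}"

lemma fin_sys: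
  assumes wf: "wf_system PS"
  shows "finite (sysD PS)" "finite (sysR PS)"
proof -
  have f: "\<And>i. i \<in> peer_ids PS \<Longrightarrow> wf_peer (length PS) i (peer_of PS i)" using wf_peerD[OF wf] .
  have fi: "finite (peer_ids PS)" unfolding peer_ids_def by simp
  show "finite (sysD PS)" unfolding sysD_def using fi f unfolding wf_peer_def by auto
  show "finite (sysR PS)" unfolding sysR_def sysLP_def sysMP_def sysIC_def
    using fi f unfolding wf_peer_def by auto
qed

lemma fin_HA: assumes "wf_system PS" shows "finite (HA PS)"
  unfolding HA_def using fin_sys(2)[OF assms] by auto

lemma vars_trm_iff: "v \<in> vars_trm t \<longleftrightarrow> t = Var v"
  by (cases t) auto

lemma fin_Good:
  assumes wf: "wf_system PS" shows "finite (Good PS)"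
proof -
  have fP: "finite (Pset PS)" unfolding Pset_def using fin_sys[OF wf] fin_HA[OF wf] by auto
  have "\<forall>h\<in>HA PS. finite (Const -` set (aargs h))"
    by (auto intro!: finite_vimageI simp: inj_def)
  then have fC: "finite (Cset PS)" unfolding Cset_def using fin_sys[OF wf] fin_HA[OF wf] by auto
  have "Good PS \<subseteq> (\<lambda>(ip, xs). GAtom (fst ip) (snd ip) xs) ` (Pset PS \<times> {xs. set xs \<subseteq> Cset PS \<and> length xs \<le> Lb PS})"
  proof
    fix a assume a: "a \<in> Good PS"
    have "a = (\<lambda>(ip, xs). GAtom (fst ip) (snd ip) xs) ((gid a, gpred a), gargs a)" by (cases a) simp
    then show "a \<in> (\<lambda>(ip, xs). GAtom (fst ip) (snd ip) xs) ` (Pset PS \<times> {xs. set xs \<subseteq> Cset PS \<and> length xs \<le> Lb PS})"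
      using a unfolding Good_def by blast
  qed
  moreover have "finite ((\<lambda>(ip, xs). GAtom (fst ip) (snd ip) xs) ` (Pset PS \<times> {xs. set xs \<subseteq> Cset PS \<and> length xs \<le> Lb PS}))"
    using fP finite_lists_length_le[OF fC] by auto
  ultimately show ?thesis by (rule finite_subset)
qed

lemma D_good: "wf_system PS \<Longrightarrow> a \<in> sysD PS \<Longrightarrow> a \<in> Good PS"
proof -
  assume wf: "wf_system PS" and a: "a \<in> sysD PS"
  have "length (gargs a) \<le> (\<Sum>a\<in>sysD PS. length (gargs a))"
    using member_le_sum[of a "sysD PS" "\<lambda>a. length (gargs a)"] a fin_sys(1)[OF wf] by simp
  then show "a \<in> Good PS" using a unfolding Good_def Pset_def Cset_def Lb_def by auto
qed

lemma inst_good: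
  assumes wf: "wf_system PS" and h: "h \<in> HA PS"
    and vs: "vars_atom h \<subseteq> (\<Union>a\<in>set as. vars_atom a)"
    and gd: "\<forall>a\<in>set as. inst_atom \<sigma> a \<in> Good PS"
  shows "inst_atom \<sigma> h \<in> Good PS"
proof -
  have "length (aargs h) \<le> (\<Sum>h\<in>HA PS. length (aargs h))"
    using member_le_sum[of h "HA PS" "\<lambda>h. length (aargs h)"] h fin_HA[OF wf] by simp
  then have L: "length (aargs h) \<le> Lb PS" unfolding Lb_def by simp
  have P: "(aid h, apred h) \<in> Pset PS" using h unfolding Pset_def by auto
  have C: "inst_trm \<sigma> t \<in> Cset PS" if t: "t \<in> set (aargs h)" for t
  proof (cases t)
    case (Const c)
    then show ?thesis using t h unfolding Cset_def by auto
  next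
    case (Var v)
    then have "v \<in> vars_atom h" using t unfolding vars_atom_def by force
    then obtain a where a: "a \<in> set as" "v \<in> vars_atom a" using vs by blast
    then have "Var v \<in> set (aargs a)" unfolding vars_atom_def
      by (auto simp: vars_trm_iff)
    then have "\<sigma> v \<in> set (gargs (inst_atom \<sigma> a))" by force
    then show ?thesis using gd a(1) Var unfolding Good_def by auto
  qed
  show ?thesis using L P C unfolding Good_def by auto
qed


lemma sysR_safe: assumes wf: "wf_system PS" and r: "r \<in> sysR PS" shows "safe r"
proof -
  obtain i where i: "i \<in> peer_ids PS" "r \<in> pLP (peer_of PS i) \<union> pMP (peer_of PS i) \<union> pIC (peer_of PS i)"
    using r unfolding sysR_def sysLP_def sysMP_def sysIC_def by blast
  then show ?thesis using wf_peerD[OF wf i(1)] unfolding wf_peer_def by blast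
qed

lemma head_good:
  assumes wf: "wf_system PS" and g: "g \<in> ground_sys PS" and pos: "set (gpos g) \<subseteq> Good PS"
    and h: "ghead g = Some h"
  shows "h \<in> Good PS"
proof -
  from g consider (f) a where "a \<in> sysD PS" "g = fact a"
    | (r) \<sigma> r where "r \<in> sysR PS" "g = ground_rule \<sigma> r"
    unfolding ground_sys_def ground_def sysR_def by blast
  then show ?thesis
  proof cases
    case f
    then show ?thesis using D_good[OF wf] h unfolding fact_def by auto
  next
    case r
    have sf: "safe r" using sysR_safe[OF wf r(1)] .
    show ?thesis
    proof (cases r)
      case (Std h' B)
      have hA: "h' \<in> HA PS" using r(1) Std unfolding HA_def by force
      have vs: "vars_atom h' \<subseteq> (\<Union>a\<in>set (pos_list B). vars_atom a)"
        using sf Std by (auto simp: set_pos_list)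
      have "\<forall>a\<in>set (pos_list B). inst_atom \<sigma> a \<in> Good PS" using pos r(2) Std by auto
      then have "inst_atom \<sigma> h' \<in> Good PS" using inst_good[OF wf hA vs] by blast
      then show ?thesis using h r(2) Std by simp
    next
      case (Constr B)
      then show ?thesis using h r(2) by simp
    next
      case (MaxMap h' j as phi)
      have hA: "h' \<in> HA PS" using r(1) MaxMap unfolding HA_def by force
      have vs: "vars_atom h' \<subseteq> (\<Union>a\<in>set as. vars_atom a)" using sf MaxMap by auto
      have "\<forall>a\<in>set as. inst_atom \<sigma> a \<in> Good PS" using pos r(2) MaxMap by auto
      then have "inst_atom \<sigma> h' \<in> Good PS" using inst_good[OF wf hA vs] by blast
      then show ?thesis using h r(2) MaxMap by simp
    next
      case (MinMap h' j as phi)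
      have hA: "h' \<in> HA PS" using r(1) MinMap unfolding HA_def by force
      have vs: "vars_atom h' \<subseteq> (\<Union>a\<in>set as. vars_atom a)" using sf MinMap by auto
      have "\<forall>a\<in>set as. inst_atom \<sigma> a \<in> Good PS" using pos r(2) MinMap by auto
      then have "inst_atom \<sigma> h' \<in> Good PS" using inst_good[OF wf hA vs] by blast
      then show ?thesis using h r(2) MinMap by simp
    qed
  qed
qed

lemma weak_sub_good:
  assumes wf: "wf_system PS" and wm: "weak_model PS M"
  shows "M \<subseteq> Good PS"
proof -
  define S where "S = {g\<in>ground_sys PS. set (gneg g) \<inter> M = {} \<and> (gmap g \<longrightarrow> (\<exists>h. ghead g = Some h \<and> h \<in> M))}"
  have "M \<in> MM (stn ` S)" using wm unfolding weak_model_def St_reduct S_def by simp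
  then have mod: "is_model (stn ` S) M" and mn: "\<not> (\<exists>N. N \<subset> M \<and> is_model (stn ` S) N)"
    unfolding MM_def by auto
  have "is_model (stn ` S) (M \<inter> Good PS)"
    unfolding is_model_def
  proof (intro ballI impI)
    fix g' assume g': "g' \<in> stn ` S" and bt: "body_true (M \<inter> Good PS) g'"
    obtain g where g: "g \<in> S" "g' = stn g" using g' by auto
    have gs: "g \<in> ground_sys PS" using g(1) unfolding S_def by simp
    have "body_true M g'" using body_mono[OF bt] g(2) unfolding stn_def by auto
    then have c: "case ghead g' of None \<Rightarrow> False | Some h \<Rightarrow> h \<in> M"
      using mod[unfolded is_model_def, rule_format, OF g'] by simp
    have pos: "set (gpos g) \<subseteq> Good PS" using bt g(2) unfolding body_true_def stn_def by auto
    show "case ghead g' of None \<Rightarrow> False | Some h \<Rightarrow> h \<in> M \<inter> Good PS"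
    proof (cases "ghead g")
      case None
      then show ?thesis using c g(2) unfolding stn_def by simp
    next
      case (Some h)
      then have "h \<in> Good PS" using head_good[OF wf gs pos] by simp
      then show ?thesis using c g(2) Some unfolding stn_def by simp
    qed
  qed
  then have "\<not> M \<inter> Good PS \<subset> M" using mn by auto
  then show ?thesis by auto
qed

theorem theorem1:
  fixes PS :: "('p,'c::linorder,'v) p2p"
  assumes "wf_system PS"
    and "maximal_system PS"
    and "locally_consistent PS"
  shows "MaxWM PS \<noteq> {}"
proof -
  have wf: "wf_system PS" by fact
  obtain M0 where M0: "weak_model PS M0" using weak_exists[OF assms(1,3)] by blast
  have fG: "finite (Good PS)" using fin_Good[OF wf] .
  have rsub: "restr_MP PS M \<subseteq> Good PS" if "weak_model PS M" for M
    using weak_sub_good[OF wf that] unfolding restr_MP_def by auto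
  have bnd: "\<forall>y. weak_model PS y \<longrightarrow> card (restr_MP PS y) < card (Good PS) + 1"
  proof (intro allI impI)
    fix y assume "weak_model PS y"
    then have "card (restr_MP PS y) \<le> card (Good PS)" using card_mono[OF fG rsub] by blast
    then show "card (restr_MP PS y) < card (Good PS) + 1" by simp
  qed
  obtain M where M: "weak_model PS M"
    and mx: "\<forall>y. weak_model PS y \<longrightarrow> card (restr_MP PS y) \<le> card (restr_MP PS M)"
    using Lattices_Big.ex_has_greatest_nat[of "weak_model PS" M0 "\<lambda>M. card (restr_MP PS M)", OF M0 bnd]
    by blast
  have "M \<in> MaxWM PS"
    unfolding MaxWM_def
  proof (intro CollectI conjI notI M)
    assume "\<exists>N. weak_model PS N \<and> restr_MP PS M \<subseteq> restr_MP PS N \<and> \<not> restr_MP PS N \<subseteq> restr_MP PS M"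
    then obtain N where N: "weak_model PS N" "restr_MP PS M \<subset> restr_MP PS N" by blast
    have "finite (restr_MP PS N)" using finite_subset[OF rsub[OF N(1)] fG] .
    then have "card (restr_MP PS M) < card (restr_MP PS N)" using psubset_card_mono N(2) by blast
    with mx N(1) show False by fastforce
  qed
  then show ?thesis by blast
qed

end
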